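(* Let $(A,B,Z,T)$ be a Hopf-Galois system over a field $k$. Then the bialgebras $A$ and $B$ are Hopf algebras (i.e. admit antipodes).
   Context: All tensor products are over a field $k$; $m_X$, $u_X$ denote multiplication and unit of an algebra $X$, $\Delta_X,\varepsilon_X$ comultiplication and counit of a bialgebra $X$. A Hopf-Galois system consists of four non-zero $k$-algebras $(A,B,Z,T)$ such that: (HG1) $A$ and $B$ are bialgebras; (HG2) $Z$ is an $A$-$B$-bicomodule algebra, with left $A$-coaction $\alpha:Z\to A\otimes Z$ and right $B$-coaction $\beta:Z\to Z\otimes B$; (HG3) there are algebra morphisms $\gamma:A\to Z\otimes T$ and $\delta:B\to T\otimes Z$ such that $(\gamma\otimes 1_Z)\circ\alpha=(1_Z\otimes\delta)\circ\beta$, $(\alpha\otimes 1_T)\circ\gamma=(1_A\otimes\gamma)\circ\Delta_A$, and $(1_T\otimes\beta)\circ\delta=(\delta\otimes 1_B)\circ\Delta_B$; (HG4) there is a linear map $S:T\to Z$ such that $m_Z\circ(1_Z\otimes S)\circ\gamma=u_Z\circ\varepsilon_A$ and $m_Z\circ(S\otimes 1_Z)\circ\delta=u_Z\circ\varepsilon_B$. *)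

theory Defs
  imports Main
begin

text \<open>
  Model of vector spaces over a field k: every k-vector space has a basis, so it is
  (up to isomorphism) the space of finitely supported functions  I \<rightarrow> k  for a basis
  type I.  A k-linear map from the space with basis 'i to the space with basis 'j
  is given by the images of the basis vectors: f :: 'i \<Rightarrow> 'j \<Rightarrow> 'k, where f i is
  a finitely supported function (condition lmap).  The tensor product of the spaces
  with bases 'i and 'j is the space with basis 'i \<times> 'j; the ground field k itself
  is the space with basis unit.
\<close>

definition lmap :: "('i \<Rightarrow> 'j \<Rightarrow> 'k::zero) \<Rightarrow> bool" where
  "lmap f \<longleftrightarrow> (\<forall>i. finite {j. f i j \<noteq> 0})"

text \<open>Composition  g \<circ> f  (first f, then g).\<close>
definition lcomp :: "('j \<Rightarrow> 'l \<Rightarrow> 'k::comm_semiring_1) \<Rightarrow> ('i \<Rightarrow> 'j \<Rightarrow> 'k) \<Rightarrow> 'i \<Rightarrow> 'l \<Rightarrow> 'k"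
  (infixr "\<circ>\<^sub>L" 55) where
  "g \<circ>\<^sub>L f = (\<lambda>i l. \<Sum>j\<in>{j. f i j \<noteq> 0}. f i j * g j l)"

definition ltensor :: "('i \<Rightarrow> 'j \<Rightarrow> 'k::comm_semiring_1) \<Rightarrow> ('i2 \<Rightarrow> 'j2 \<Rightarrow> 'k) \<Rightarrow> ('i \<times> 'i2) \<Rightarrow> ('j \<times> 'j2) \<Rightarrow> 'k"
  (infixr "\<otimes>\<^sub>L" 60) where
  "f \<otimes>\<^sub>L g = (\<lambda>(i, i') (j, j'). f i j * g i' j')"

definition lbasis :: "('i \<Rightarrow> 'j) \<Rightarrow> 'i \<Rightarrow> 'j \<Rightarrow> 'k::comm_semiring_1" where
  "lbasis h = (\<lambda>i j. if h i = j then 1 else 0)"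

definition lid :: "'i \<Rightarrow> 'i \<Rightarrow> 'k::comm_semiring_1" where
  "lid = lbasis id"

definition lassoc :: "(('a \<times> 'b) \<times> 'c) \<Rightarrow> ('a \<times> ('b \<times> 'c)) \<Rightarrow> 'k::comm_semiring_1" where
  "lassoc = lbasis (\<lambda>((a, b), c). (a, (b, c)))"

definition lunitor :: "(unit \<times> 'a) \<Rightarrow> 'a \<Rightarrow> 'k::comm_semiring_1" where
  "lunitor = lbasis snd"
definition runitor :: "('a \<times> unit) \<Rightarrow> 'a \<Rightarrow> 'k::comm_semiring_1" where
  "runitor = lbasis fst"
definition lunitor_inv :: "'a \<Rightarrow> (unit \<times> 'a) \<Rightarrow> 'k::comm_semiring_1" where
  "lunitor_inv = lbasis (\<lambda>a. ((), a))"
definition runitor_inv :: "'a \<Rightarrow> ('a \<times> unit) \<Rightarrow> 'k::comm_semiring_1" where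
  "runitor_inv = lbasis (\<lambda>a. (a, ()))"

definition is_algebra :: "('a \<times> 'a \<Rightarrow> 'a \<Rightarrow> 'k::field) \<Rightarrow> (unit \<Rightarrow> 'a \<Rightarrow> 'k) \<Rightarrow> bool" where
  "is_algebra m u \<longleftrightarrow> lmap m \<and> lmap u
     \<and> m \<circ>\<^sub>L (m \<otimes>\<^sub>L lid) = m \<circ>\<^sub>L (lid \<otimes>\<^sub>L m) \<circ>\<^sub>L lassoc
     \<and> m \<circ>\<^sub>L (u \<otimes>\<^sub>L lid) = lunitor
     \<and> m \<circ>\<^sub>L (lid \<otimes>\<^sub>L u) = runitor"

definition nonzero_algebra :: "(unit \<Rightarrow> 'a \<Rightarrow> 'k::zero) \<Rightarrow> bool" where
  "nonzero_algebra u \<longleftrightarrow> u () \<noteq> (\<lambda>_. 0)"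

definition tmult :: "('a \<times> 'a \<Rightarrow> 'a \<Rightarrow> 'k::comm_semiring_1) \<Rightarrow> ('b \<times> 'b \<Rightarrow> 'b \<Rightarrow> 'k)
    \<Rightarrow> ('a \<times> 'b) \<times> ('a \<times> 'b) \<Rightarrow> ('a \<times> 'b) \<Rightarrow> 'k" where
  "tmult m1 m2 = (\<lambda>((a, b), (a', b')) (c, d). m1 (a, a') c * m2 (b, b') d)"
definition tunit :: "(unit \<Rightarrow> 'a \<Rightarrow> 'k::comm_semiring_1) \<Rightarrow> (unit \<Rightarrow> 'b \<Rightarrow> 'k) \<Rightarrow> unit \<Rightarrow> ('a \<times> 'b) \<Rightarrow> 'k" where
  "tunit u1 u2 = (\<lambda>_ (c, d). u1 () c * u2 () d)"
definition kmult :: "unit \<times> unit \<Rightarrow> unit \<Rightarrow> 'k::comm_semiring_1" where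
  "kmult = (\<lambda>_ _. 1)"
definition kunit :: "unit \<Rightarrow> unit \<Rightarrow> 'k::comm_semiring_1" where
  "kunit = (\<lambda>_ _. 1)"

definition alg_hom :: "('a \<times> 'a \<Rightarrow> 'a \<Rightarrow> 'k::field) \<Rightarrow> (unit \<Rightarrow> 'a \<Rightarrow> 'k)
    \<Rightarrow> ('b \<times> 'b \<Rightarrow> 'b \<Rightarrow> 'k) \<Rightarrow> (unit \<Rightarrow> 'b \<Rightarrow> 'k) \<Rightarrow> ('a \<Rightarrow> 'b \<Rightarrow> 'k) \<Rightarrow> bool" where
  "alg_hom m u m' u' f \<longleftrightarrow> lmap f \<and> f \<circ>\<^sub>L m = m' \<circ>\<^sub>L (f \<otimes>\<^sub>L f) \<and> f \<circ>\<^sub>L u = u'"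

definition is_bialgebra :: "('a \<times> 'a \<Rightarrow> 'a \<Rightarrow> 'k::field) \<Rightarrow> (unit \<Rightarrow> 'a \<Rightarrow> 'k)
    \<Rightarrow> ('a \<Rightarrow> 'a \<times> 'a \<Rightarrow> 'k) \<Rightarrow> ('a \<Rightarrow> unit \<Rightarrow> 'k) \<Rightarrow> bool" where
  "is_bialgebra m u \<Delta> \<epsilon> \<longleftrightarrow> is_algebra m u \<and> lmap \<Delta> \<and> lmap \<epsilon>
     \<and> lassoc \<circ>\<^sub>L (\<Delta> \<otimes>\<^sub>L lid) \<circ>\<^sub>L \<Delta> = (lid \<otimes>\<^sub>L \<Delta>) \<circ>\<^sub>L \<Delta>
     \<and> (\<epsilon> \<otimes>\<^sub>L lid) \<circ>\<^sub>L \<Delta> = lunitor_inv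
     \<and> (lid \<otimes>\<^sub>L \<epsilon>) \<circ>\<^sub>L \<Delta> = runitor_inv
     \<and> alg_hom m u (tmult m m) (tunit u u) \<Delta>
     \<and> alg_hom m u kmult kunit \<epsilon>"

definition is_antipode :: "('a \<times> 'a \<Rightarrow> 'a \<Rightarrow> 'k::field) \<Rightarrow> (unit \<Rightarrow> 'a \<Rightarrow> 'k)
    \<Rightarrow> ('a \<Rightarrow> 'a \<times> 'a \<Rightarrow> 'k) \<Rightarrow> ('a \<Rightarrow> unit \<Rightarrow> 'k) \<Rightarrow> ('a \<Rightarrow> 'a \<Rightarrow> 'k) \<Rightarrow> bool" where
  "is_antipode m u \<Delta> \<epsilon> S \<longleftrightarrow> lmap S
     \<and> m \<circ>\<^sub>L (S \<otimes>\<^sub>L lid) \<circ>\<^sub>L \<Delta> = u \<circ>\<^sub>L \<epsilon>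
     \<and> m \<circ>\<^sub>L (lid \<otimes>\<^sub>L S) \<circ>\<^sub>L \<Delta> = u \<circ>\<^sub>L \<epsilon>"

definition is_hopf_algebra :: "('a \<times> 'a \<Rightarrow> 'a \<Rightarrow> 'k::field) \<Rightarrow> (unit \<Rightarrow> 'a \<Rightarrow> 'k)
    \<Rightarrow> ('a \<Rightarrow> 'a \<times> 'a \<Rightarrow> 'k) \<Rightarrow> ('a \<Rightarrow> unit \<Rightarrow> 'k) \<Rightarrow> bool" where
  "is_hopf_algebra m u \<Delta> \<epsilon> \<longleftrightarrow> is_bialgebra m u \<Delta> \<epsilon> \<and> (\<exists>S. is_antipode m u \<Delta> \<epsilon> S)"

definition left_comodule :: "('a \<Rightarrow> 'a \<times> 'a \<Rightarrow> 'k::field) \<Rightarrow> ('a \<Rightarrow> unit \<Rightarrow> 'k)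
    \<Rightarrow> ('z \<Rightarrow> 'a \<times> 'z \<Rightarrow> 'k) \<Rightarrow> bool" where
  "left_comodule \<Delta> \<epsilon> \<alpha> \<longleftrightarrow> lmap \<alpha>
     \<and> lassoc \<circ>\<^sub>L (\<Delta> \<otimes>\<^sub>L lid) \<circ>\<^sub>L \<alpha> = (lid \<otimes>\<^sub>L \<alpha>) \<circ>\<^sub>L \<alpha>
     \<and> (\<epsilon> \<otimes>\<^sub>L lid) \<circ>\<^sub>L \<alpha> = lunitor_inv"

definition right_comodule :: "('b \<Rightarrow> 'b \<times> 'b \<Rightarrow> 'k::field) \<Rightarrow> ('b \<Rightarrow> unit \<Rightarrow> 'k)
    \<Rightarrow> ('z \<Rightarrow> 'z \<times> 'b \<Rightarrow> 'k) \<Rightarrow> bool" where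
  "right_comodule \<Delta> \<epsilon> \<beta> \<longleftrightarrow> lmap \<beta>
     \<and> lassoc \<circ>\<^sub>L (\<beta> \<otimes>\<^sub>L lid) \<circ>\<^sub>L \<beta> = (lid \<otimes>\<^sub>L \<Delta>) \<circ>\<^sub>L \<beta>
     \<and> (lid \<otimes>\<^sub>L \<epsilon>) \<circ>\<^sub>L \<beta> = runitor_inv"

definition bicomodule_algebra ::
  "('a \<times> 'a \<Rightarrow> 'a \<Rightarrow> 'k::field) \<Rightarrow> (unit \<Rightarrow> 'a \<Rightarrow> 'k) \<Rightarrow> ('a \<Rightarrow> 'a \<times> 'a \<Rightarrow> 'k) \<Rightarrow> ('a \<Rightarrow> unit \<Rightarrow> 'k)
   \<Rightarrow> ('b \<times> 'b \<Rightarrow> 'b \<Rightarrow> 'k) \<Rightarrow> (unit \<Rightarrow> 'b \<Rightarrow> 'k) \<Rightarrow> ('b \<Rightarrow> 'b \<times> 'b \<Rightarrow> 'k) \<Rightarrow> ('b \<Rightarrow> unit \<Rightarrow> 'k)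
   \<Rightarrow> ('z \<times> 'z \<Rightarrow> 'z \<Rightarrow> 'k) \<Rightarrow> (unit \<Rightarrow> 'z \<Rightarrow> 'k)
   \<Rightarrow> ('z \<Rightarrow> 'a \<times> 'z \<Rightarrow> 'k) \<Rightarrow> ('z \<Rightarrow> 'z \<times> 'b \<Rightarrow> 'k) \<Rightarrow> bool" where
  "bicomodule_algebra mA uA \<Delta>A \<epsilon>A mB uB \<Delta>B \<epsilon>B mZ uZ \<alpha> \<beta> \<longleftrightarrow>
     is_algebra mZ uZ
     \<and> left_comodule \<Delta>A \<epsilon>A \<alpha> \<and> right_comodule \<Delta>B \<epsilon>B \<beta>
     \<and> lassoc \<circ>\<^sub>L (\<alpha> \<otimes>\<^sub>L lid) \<circ>\<^sub>L \<beta> = (lid \<otimes>\<^sub>L \<beta>) \<circ>\<^sub>L \<alpha>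
     \<and> alg_hom mZ uZ (tmult mA mZ) (tunit uA uZ) \<alpha>
     \<and> alg_hom mZ uZ (tmult mZ mB) (tunit uZ uB) \<beta>"

definition hopf_galois_system ::
  "('a \<times> 'a \<Rightarrow> 'a \<Rightarrow> 'k::field) \<Rightarrow> (unit \<Rightarrow> 'a \<Rightarrow> 'k) \<Rightarrow> ('a \<Rightarrow> 'a \<times> 'a \<Rightarrow> 'k) \<Rightarrow> ('a \<Rightarrow> unit \<Rightarrow> 'k)
   \<Rightarrow> ('b \<times> 'b \<Rightarrow> 'b \<Rightarrow> 'k) \<Rightarrow> (unit \<Rightarrow> 'b \<Rightarrow> 'k) \<Rightarrow> ('b \<Rightarrow> 'b \<times> 'b \<Rightarrow> 'k) \<Rightarrow> ('b \<Rightarrow> unit \<Rightarrow> 'k)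
   \<Rightarrow> ('z \<times> 'z \<Rightarrow> 'z \<Rightarrow> 'k) \<Rightarrow> (unit \<Rightarrow> 'z \<Rightarrow> 'k)
   \<Rightarrow> ('t \<times> 't \<Rightarrow> 't \<Rightarrow> 'k) \<Rightarrow> (unit \<Rightarrow> 't \<Rightarrow> 'k)
   \<Rightarrow> ('z \<Rightarrow> 'a \<times> 'z \<Rightarrow> 'k) \<Rightarrow> ('z \<Rightarrow> 'z \<times> 'b \<Rightarrow> 'k)
   \<Rightarrow> ('a \<Rightarrow> 'z \<times> 't \<Rightarrow> 'k) \<Rightarrow> ('b \<Rightarrow> 't \<times> 'z \<Rightarrow> 'k) \<Rightarrow> ('t \<Rightarrow> 'z \<Rightarrow> 'k) \<Rightarrow> bool" where
  "hopf_galois_system mA uA \<Delta>A \<epsilon>A mB uB \<Delta>B \<epsilon>B mZ uZ mT uT \<alpha> \<beta> \<gamma> \<delta> S \<longleftrightarrow>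
     is_algebra mT uT
     \<and> nonzero_algebra uA \<and> nonzero_algebra uB \<and> nonzero_algebra uZ \<and> nonzero_algebra uT
     \<comment> \<open>HG1\<close>
     \<and> is_bialgebra mA uA \<Delta>A \<epsilon>A \<and> is_bialgebra mB uB \<Delta>B \<epsilon>B
     \<comment> \<open>HG2\<close>
     \<and> bicomodule_algebra mA uA \<Delta>A \<epsilon>A mB uB \<Delta>B \<epsilon>B mZ uZ \<alpha> \<beta>
     \<comment> \<open>HG3\<close>
     \<and> alg_hom mA uA (tmult mZ mT) (tunit uZ uT) \<gamma>
     \<and> alg_hom mB uB (tmult mT mZ) (tunit uT uZ) \<delta>
     \<and> lassoc \<circ>\<^sub>L (\<gamma> \<otimes>\<^sub>L lid) \<circ>\<^sub>L \<alpha> = (lid \<otimes>\<^sub>L \<delta>) \<circ>\<^sub>L \<beta>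
     \<and> lassoc \<circ>\<^sub>L (\<alpha> \<otimes>\<^sub>L lid) \<circ>\<^sub>L \<gamma> = (lid \<otimes>\<^sub>L \<gamma>) \<circ>\<^sub>L \<Delta>A
     \<and> (lid \<otimes>\<^sub>L \<beta>) \<circ>\<^sub>L \<delta> = lassoc \<circ>\<^sub>L (\<delta> \<otimes>\<^sub>L lid) \<circ>\<^sub>L \<Delta>B
     \<comment> \<open>HG4\<close>
     \<and> lmap S
     \<and> mZ \<circ>\<^sub>L (lid \<otimes>\<^sub>L S) \<circ>\<^sub>L \<gamma> = uZ \<circ>\<^sub>L \<epsilon>A
     \<and> mZ \<circ>\<^sub>L (S \<otimes>\<^sub>L lid) \<circ>\<^sub>L \<delta> = uZ \<circ>\<^sub>L \<epsilon>B"

end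

theory Submission
  imports Defs
begin

definition vsum :: "('j \<Rightarrow> 'k::comm_semiring_1) \<Rightarrow> ('j \<Rightarrow> 'k) \<Rightarrow> 'k" where
  "vsum v F = (\<Sum>j\<in>{j. v j \<noteq> 0}. v j * F j)"

lemma vsum_U:
  assumes "finite U" "{j. v j \<noteq> 0} \<subseteq> U"
  shows "vsum v F = (\<Sum>j\<in>U. v j * F j)"
  unfolding vsum_def using assms by (intro sum.mono_neutral_left) auto

lemma vsum_cmult: "vsum v (\<lambda>j. c * F j) = c * vsum v F"
  unfolding vsum_def by (simp add: sum_distrib_left mult.left_commute)

lemma vsum_multc: "vsum v (\<lambda>j. F j * c) = vsum v F * c"
  unfolding vsum_def by (simp add: sum_distrib_right mult.assoc)

lemma vsum_zero[simp]: "vsum v (\<lambda>j. 0) = 0"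
  unfolding vsum_def by simp

lemma vsum_add: "vsum v (\<lambda>j. F j + G j) = vsum v F + vsum v G"
  unfolding vsum_def by (simp add: distrib_left sum.distrib)

lemma vsum_cong: "(\<And>j. v j \<noteq> 0 \<Longrightarrow> F j = G j) \<Longrightarrow> vsum v F = vsum v G"
  unfolding vsum_def by (rule sum.cong) auto

lemma vsum_infinite: "infinite {j. v j \<noteq> 0} \<Longrightarrow> vsum v F = 0"
  unfolding vsum_def by simp

lemma vsum_swap: "vsum v (\<lambda>i. vsum w (\<lambda>j. G i j)) = vsum w (\<lambda>j. vsum v (\<lambda>i. G i j))"
proof (cases "finite {j. v j \<noteq> 0} \<and> finite {j. w j \<noteq> 0}")
  case True
  then show ?thesis unfolding vsum_def
    by (simp add: sum_distrib_left mult_ac sum.swap[of _ "{j. v j \<noteq> 0}"])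
next
  case False
  then show ?thesis by (auto simp: vsum_infinite)
qed

lemma vsum_delta:
  "finite {j. v j \<noteq> 0} \<Longrightarrow> vsum v (\<lambda>j. if j = l then 1 else 0) = v l"
  unfolding vsum_def
  by (cases "v l = 0") (auto simp: sum.delta' if_distrib cong: if_cong)

lemma vsum_unit: "vsum (v :: unit \<Rightarrow> 'k::comm_semiring_1) F = v () * F ()"
proof -
  have "vsum v F = (\<Sum>j\<in>UNIV. v j * F j)" by (rule vsum_U) auto
  also have "\<dots> = v () * F ()" by (simp add: UNIV_unit)
  finally show ?thesis .
qed

lemma lmap_comp[simp]:
  fixes f :: "'i \<Rightarrow> 'j \<Rightarrow> 'k::field"
  assumes "lmap f" "lmap g" shows "lmap (g \<circ>\<^sub>L f)"
  unfolding lmap_def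
proof
  fix i
  have "{l. (g \<circ>\<^sub>L f) i l \<noteq> 0} \<subseteq> (\<Union>j\<in>{j. f i j \<noteq> 0}. {l. g j l \<noteq> 0})"
    unfolding lcomp_def by (auto elim!: sum.not_neutral_contains_not_neutral)
  moreover have "finite (\<Union>j\<in>{j. f i j \<noteq> 0}. {l. g j l \<noteq> 0})"
    using assms unfolding lmap_def by auto
  ultimately show "finite {l. (g \<circ>\<^sub>L f) i l \<noteq> 0}" by (rule finite_subset)
qed

lemma supp_tensor:
  fixes f :: "'i \<Rightarrow> 'j \<Rightarrow> 'k::field"
  shows "{p. (f \<otimes>\<^sub>L g) (i, i') p \<noteq> 0} = {j. f i j \<noteq> 0} \<times> {j. g i' j \<noteq> 0}"
  unfolding ltensor_def by auto

lemma lmap_tensor[simp]: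
  fixes f :: "'i \<Rightarrow> 'j \<Rightarrow> 'k::field" and g :: "'c \<Rightarrow> 'd \<Rightarrow> 'k"
  assumes "lmap f" "lmap g" shows "lmap (f \<otimes>\<^sub>L g)"
  unfolding lmap_def
proof
  fix p :: "'i \<times> 'c" obtain i i' where p: "p = (i, i')" by force
  show "finite {q. (f \<otimes>\<^sub>L g) p q \<noteq> 0}" unfolding p supp_tensor
    using assms unfolding lmap_def by auto
qed

lemma supp_lbasis: "{j. (lbasis h i :: 'j \<Rightarrow> 'k::field) j \<noteq> 0} = {h i}"
  unfolding lbasis_def by auto

lemma lmap_lbasis[simp]: "lmap (lbasis h :: 'i \<Rightarrow> 'j \<Rightarrow> 'k::field)"
  unfolding lmap_def supp_lbasis by simp

lemma lmap_lid[simp]: "lmap (lid :: 'i \<Rightarrow> 'i \<Rightarrow> 'k::field)"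
  unfolding lid_def by simp
lemma lmap_lassoc[simp]: "lmap (lassoc :: _ \<Rightarrow> _ \<Rightarrow> 'k::field)"
  unfolding lassoc_def by simp
lemma lmap_unitors[simp]: "lmap (lunitor :: _ \<Rightarrow> _ \<Rightarrow> 'k::field)" "lmap (runitor :: _ \<Rightarrow> _ \<Rightarrow> 'k::field)"
  "lmap (lunitor_inv :: _ \<Rightarrow> _ \<Rightarrow> 'k::field)" "lmap (runitor_inv :: _ \<Rightarrow> _ \<Rightarrow> 'k::field)"
  unfolding lunitor_def runitor_def lunitor_inv_def runitor_inv_def by simp_all

lemma vsum_comp:
  fixes f :: "'i \<Rightarrow> 'j \<Rightarrow> 'k::field"
  assumes "lmap f" "lmap g"
  shows "vsum ((g \<circ>\<^sub>L f) i) F = vsum (f i) (\<lambda>j. vsum (g j) F)"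
proof -
  define Sf where "Sf = {j. f i j \<noteq> 0}"
  define U where "U = (\<Union>j\<in>Sf. {l. g j l \<noteq> 0})"
  have fSf: "finite Sf" using assms unfolding lmap_def Sf_def by auto
  have fU: "finite U" using assms fSf unfolding lmap_def U_def by auto
  have sub: "{l. (g \<circ>\<^sub>L f) i l \<noteq> 0} \<subseteq> U"
    unfolding lcomp_def U_def Sf_def by (auto elim!: sum.not_neutral_contains_not_neutral)
  have "vsum ((g \<circ>\<^sub>L f) i) F = (\<Sum>l\<in>U. (g \<circ>\<^sub>L f) i l * F l)"
    by (rule vsum_U[OF fU sub])
  also have "\<dots> = (\<Sum>l\<in>U. \<Sum>j\<in>Sf. f i j * g j l * F l)"
    unfolding lcomp_def Sf_def by (simp add: sum_distrib_right)
  also have "\<dots> = (\<Sum>j\<in>Sf. \<Sum>l\<in>U. f i j * g j l * F l)" by (rule sum.swap)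
  also have "\<dots> = (\<Sum>j\<in>Sf. f i j * vsum (g j) F)"
  proof (rule sum.cong[OF refl])
    fix j assume "j \<in> Sf"
    then have "{l. g j l \<noteq> 0} \<subseteq> U" unfolding U_def by auto
    then have "vsum (g j) F = (\<Sum>l\<in>U. g j l * F l)" by (rule vsum_U[OF fU])
    then show "(\<Sum>l\<in>U. f i j * g j l * F l) = f i j * vsum (g j) F"
      by (simp add: sum_distrib_left mult_ac)
  qed
  also have "\<dots> = vsum (f i) (\<lambda>j. vsum (g j) F)" unfolding vsum_def Sf_def ..
  finally show ?thesis .
qed

lemma vsum_tensor:
  fixes f :: "'i \<Rightarrow> 'j \<Rightarrow> 'k::field"
  shows "vsum ((f \<otimes>\<^sub>L g) p) F = (case p of (i, i') \<Rightarrow> vsum (f i) (\<lambda>a. vsum (g i') (\<lambda>b. F (a, b))))"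
proof -
  obtain i i' where p: "p = (i, i')" by force
  show ?thesis
  proof (cases "finite {j. f i j \<noteq> 0} \<and> finite {j. g i' j \<noteq> 0}")
    case True
    have "vsum ((f \<otimes>\<^sub>L g) (i, i')) F = (\<Sum>q\<in>{j. f i j \<noteq> 0} \<times> {j. g i' j \<noteq> 0}. (f \<otimes>\<^sub>L g) (i, i') q * F q)"
      unfolding vsum_def supp_tensor ..
    also have "\<dots> = (\<Sum>a\<in>{j. f i j \<noteq> 0}. \<Sum>b\<in>{j. g i' j \<noteq> 0}. f i a * g i' b * F (a, b))"
      unfolding sum.cartesian_product by (simp add: ltensor_def split_def)
    also have "\<dots> = vsum (f i) (\<lambda>a. vsum (g i') (\<lambda>b. F (a, b)))"
      unfolding vsum_def by (simp add: sum_distrib_left mult.assoc)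
    finally show ?thesis using p by simp
  next
    case False
    then consider "infinite {j. f i j \<noteq> 0}" | "finite {j. f i j \<noteq> 0}" "infinite {j. g i' j \<noteq> 0}" by blast
    then show ?thesis
    proof cases
      case 1
      show ?thesis
      proof (cases "{j. g i' j \<noteq> 0} = {}")
        case False
        then have "infinite ({j. f i j \<noteq> 0} \<times> {j. g i' j \<noteq> 0})"
          using 1 finite_cartesian_productD1 by blast
        then show ?thesis using p 1 by (simp add: vsum_infinite supp_tensor)
      qed (use p in \<open>auto simp: vsum_def supp_tensor\<close>)
    next
      case 2
      show ?thesis
      proof (cases "{j. f i j \<noteq> 0} = {}")
        case False
        then have "infinite ({j. f i j \<noteq> 0} \<times> {j. g i' j \<noteq> 0})"
          using 2 finite_cartesian_productD2 by blast
        then show ?thesis using p 2 by (simp add: vsum_infinite supp_tensor)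
      qed (use p in \<open>auto simp: vsum_def supp_tensor\<close>)
    qed
  qed
qed

lemma vsum_lbasis[simp]: "vsum (lbasis h i :: 'j \<Rightarrow> 'k::field) F = F (h i)"
  unfolding vsum_def supp_lbasis by (simp add: lbasis_def)

lemma vsum_lid[simp]: "vsum (lid i :: 'j \<Rightarrow> 'k::field) F = F i"
  unfolding lid_def by simp
lemma vsum_lassoc[simp]: "vsum (lassoc p :: _ \<Rightarrow> 'k::field) F = (case p of ((a,b),c) \<Rightarrow> F (a,(b,c)))"
  unfolding lassoc_def by (simp add: split_def)
lemma vsum_lunitor[simp]: "vsum (lunitor p :: _ \<Rightarrow> 'k::field) F = F (snd p)"
  unfolding lunitor_def by simp
lemma vsum_runitor[simp]: "vsum (runitor p :: _ \<Rightarrow> 'k::field) F = F (fst p)"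
  unfolding runitor_def by simp
lemma vsum_lunitor_inv[simp]: "vsum (lunitor_inv x :: _ \<Rightarrow> 'k::field) F = F ((), x)"
  unfolding lunitor_inv_def by simp
lemma vsum_runitor_inv[simp]: "vsum (runitor_inv x :: _ \<Rightarrow> 'k::field) F = F (x, ())"
  unfolding runitor_inv_def by simp

lemma tmult_tensor: "tmult m1 m2 p = (m1 \<otimes>\<^sub>L m2) ((fst (fst p), fst (snd p)), (snd (fst p), snd (snd p)))"
  unfolding tmult_def ltensor_def by (simp add: split_def)

lemma vsum_tmult[simp]:
  fixes m1 :: "'a \<times> 'a \<Rightarrow> 'a \<Rightarrow> 'k::field"
  shows "vsum (tmult m1 m2 ((a,b),(a',b'))) F = vsum (m1 (a,a')) (\<lambda>c. vsum (m2 (b,b')) (\<lambda>d. F (c,d)))"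
  unfolding tmult_tensor by (simp add: vsum_tensor)

lemma vsum_tmult_gen:
  fixes m1 :: "'a \<times> 'a \<Rightarrow> 'a \<Rightarrow> 'k::field"
  shows "vsum (tmult m1 m2 q) F = vsum (m1 (fst (fst q), fst (snd q))) (\<lambda>c. vsum (m2 (snd (fst q), snd (snd q))) (\<lambda>d. F (c,d)))"
  unfolding tmult_tensor by (simp add: vsum_tensor)

lemma vsum_tunit[simp]:
  fixes u1 :: "unit \<Rightarrow> 'a \<Rightarrow> 'k::field"
  shows "vsum (tunit u1 u2 x) F = vsum (u1 ()) (\<lambda>c. vsum (u2 ()) (\<lambda>d. F (c,d)))"
proof -
  have "tunit u1 u2 x = (u1 \<otimes>\<^sub>L u2) ((),())" unfolding tunit_def ltensor_def by simp
  then show ?thesis by (simp add: vsum_tensor)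
qed

lemma lmap_tmult[simp]:
  fixes m1 :: "'a \<times> 'a \<Rightarrow> 'a \<Rightarrow> 'k::field"
  assumes "lmap m1" "lmap m2" shows "lmap (tmult m1 m2)"
proof -
  have "lmap (m1 \<otimes>\<^sub>L m2)" using assms by simp
  then show ?thesis unfolding lmap_def tmult_tensor by blast
qed

lemma lmap_tunit[simp]:
  fixes u1 :: "unit \<Rightarrow> 'a \<Rightarrow> 'k::field"
  assumes "lmap u1" "lmap u2" shows "lmap (tunit u1 u2)"
proof -
  have "lmap (u1 \<otimes>\<^sub>L u2)" using assms by simp
  moreover have "tunit u1 u2 x = (u1 \<otimes>\<^sub>L u2) ((),())" for x unfolding tunit_def ltensor_def by simp
  ultimately show ?thesis unfolding lmap_def by metis
qed

lemma lmap_ext: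
  fixes f :: "'i \<Rightarrow> 'j \<Rightarrow> 'k::field"
  assumes "lmap f" "lmap g" "\<And>i F. vsum (f i) F = vsum (g i) F"
  shows "f = g"
proof (intro ext)
  fix i l
  have "f i l = vsum (f i) (\<lambda>j. if j = l then 1 else 0)"
    using assms(1) unfolding lmap_def by (simp add: vsum_delta)
  also have "\<dots> = vsum (g i) (\<lambda>j. if j = l then 1 else 0)" by (rule assms(3))
  also have "\<dots> = g i l"
    using assms(2) unfolding lmap_def by (simp add: vsum_delta)
  finally show "f i l = g i l" .
qed

lemma swap_heads: "vsum (f x) (\<lambda>i. vsum (g y) (\<lambda>j. G i j)) = vsum (g y) (\<lambda>j. vsum (f x) (\<lambda>i. G i j))"
  by (rule vsum_swap)

lemmas vsimps = vsum_comp vsum_tensor vsum_unit vsum_tmult_gen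


locale HGA =
  fixes mA :: "'a \<times> 'a \<Rightarrow> 'a \<Rightarrow> 'k::field" and uA :: "unit \<Rightarrow> 'a \<Rightarrow> 'k"
    and \<Delta>A :: "'a \<Rightarrow> 'a \<times> 'a \<Rightarrow> 'k" and \<epsilon>A :: "'a \<Rightarrow> unit \<Rightarrow> 'k"
    and \<epsilon>B :: "'b \<Rightarrow> unit \<Rightarrow> 'k"
    and mZ :: "'z \<times> 'z \<Rightarrow> 'z \<Rightarrow> 'k" and uZ :: "unit \<Rightarrow> 'z \<Rightarrow> 'k"
    and \<alpha> :: "'z \<Rightarrow> 'a \<times> 'z \<Rightarrow> 'k" and \<beta> :: "'z \<Rightarrow> 'z \<times> 'b \<Rightarrow> 'k"
    and \<gamma> :: "'a \<Rightarrow> 'z \<times> 't \<Rightarrow> 'k" and \<delta> :: "'b \<Rightarrow> 't \<times> 'z \<Rightarrow> 'k"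
    and S :: "'t \<Rightarrow> 'z \<Rightarrow> 'k" and z0 :: 'z
  assumes lm: "lmap mA" "lmap uA" "lmap \<Delta>A" "lmap \<epsilon>A" "lmap \<epsilon>B" "lmap mZ" "lmap uZ"
     "lmap \<alpha>" "lmap \<beta>" "lmap \<gamma>" "lmap \<delta>" "lmap S"
  and cA: "(lid \<otimes>\<^sub>L \<epsilon>A) \<circ>\<^sub>L \<Delta>A = runitor_inv"
  and \<alpha>_mult: "\<alpha> \<circ>\<^sub>L mZ = tmult mA mZ \<circ>\<^sub>L (\<alpha> \<otimes>\<^sub>L \<alpha>)"
  and \<alpha>_unit: "\<alpha> \<circ>\<^sub>L uZ = tunit uA uZ"
  and \<alpha>_co: "lassoc \<circ>\<^sub>L (\<Delta>A \<otimes>\<^sub>L lid) \<circ>\<^sub>L \<alpha> = (lid \<otimes>\<^sub>L \<alpha>) \<circ>\<^sub>L \<alpha>"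
  and \<beta>_counit: "(lid \<otimes>\<^sub>L \<epsilon>B) \<circ>\<^sub>L \<beta> = runitor_inv"
  and Z_assoc: "mZ \<circ>\<^sub>L (mZ \<otimes>\<^sub>L lid) = mZ \<circ>\<^sub>L (lid \<otimes>\<^sub>L mZ) \<circ>\<^sub>L lassoc"
  and Z_runit: "mZ \<circ>\<^sub>L (lid \<otimes>\<^sub>L uZ) = runitor"
  and HG3a: "lassoc \<circ>\<^sub>L (\<gamma> \<otimes>\<^sub>L lid) \<circ>\<^sub>L \<alpha> = (lid \<otimes>\<^sub>L \<delta>) \<circ>\<^sub>L \<beta>"
  and HG3b: "lassoc \<circ>\<^sub>L (\<alpha> \<otimes>\<^sub>L lid) \<circ>\<^sub>L \<gamma> = (lid \<otimes>\<^sub>L \<gamma>) \<circ>\<^sub>L \<Delta>A"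
  and HG4a: "mZ \<circ>\<^sub>L (lid \<otimes>\<^sub>L S) \<circ>\<^sub>L \<gamma> = uZ \<circ>\<^sub>L \<epsilon>A"
  and HG4b: "mZ \<circ>\<^sub>L (S \<otimes>\<^sub>L lid) \<circ>\<^sub>L \<delta> = uZ \<circ>\<^sub>L \<epsilon>B"
  and nz: "uZ () z0 \<noteq> 0"
begin

lemmas lms[simp] = lm

lemma R_cA: "vsum (\<Delta>A a) (\<lambda>(a1,a2). \<epsilon>A a2 () * H a1) = H a"
  using arg_cong[OF cA, of "\<lambda>f. vsum (f a) (\<lambda>(a1,_). H a1)"]
  by (simp add: vsimps mult.commute)

lemma R_\<alpha>mult: "vsum (mZ (x,y)) (\<lambda>p. vsum (\<alpha> p) (\<lambda>(c,w). G c w)) =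
   vsum (\<alpha> x) (\<lambda>(a1,x1). vsum (\<alpha> y) (\<lambda>(a2,y1). vsum (mA (a1,a2)) (\<lambda>c. vsum (mZ (x1,y1)) (\<lambda>w. G c w))))"
  using arg_cong[OF \<alpha>_mult, of "\<lambda>f. vsum (f (x,y)) (\<lambda>(c,w). G c w)"]
  by (simp add: vsimps split_def)

lemma R_\<alpha>unit: "vsum (uZ ()) (\<lambda>p. vsum (\<alpha> p) (\<lambda>(c,w). G c w)) = vsum (uA ()) (\<lambda>c. vsum (uZ ()) (\<lambda>w. G c w))"
  using arg_cong[OF \<alpha>_unit, of "\<lambda>f. vsum (f ()) (\<lambda>(c,w). G c w)"]
  by (simp add: vsimps split_def)

lemma R_\<alpha>co: "vsum (\<alpha> z) (\<lambda>(a1,z1). vsum (\<Delta>A a1) (\<lambda>(b1,b2). K b1 b2 z1)) =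
   vsum (\<alpha> z) (\<lambda>(b1,z2). vsum (\<alpha> z2) (\<lambda>(b2,z1). K b1 b2 z1))"
  using arg_cong[OF \<alpha>_co, of "\<lambda>f. vsum (f z) (\<lambda>(b1,(b2,z1)). K b1 b2 z1)"]
  by (simp add: vsimps split_def)

lemma R_\<beta>counit: "vsum (\<beta> z) (\<lambda>(x,b). \<epsilon>B b () * L x) = L z"
  using arg_cong[OF \<beta>_counit, of "\<lambda>f. vsum (f z) (\<lambda>(x,_). L x)"]
  by (simp add: vsimps split_def mult.commute)

lemma R_Zassoc: "vsum (mZ (x,y)) (\<lambda>p. vsum (mZ (p,w)) H) = vsum (mZ (y,w)) (\<lambda>q. vsum (mZ (x,q)) H)"
  using arg_cong[OF Z_assoc, of "\<lambda>f. vsum (f ((x,y),w)) H"]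
  by (simp add: vsimps split_def)

lemma R_Zunit: "vsum (uZ ()) (\<lambda>w. vsum (mZ (x,w)) H) = H x"
  using arg_cong[OF Z_runit, of "\<lambda>f. vsum (f (x,())) H"]
  by (simp add: vsimps split_def)

lemma R_3a: "vsum (\<alpha> z) (\<lambda>(b1,z2). vsum (\<gamma> b1) (\<lambda>(x,t). K x t z2)) =
   vsum (\<beta> z) (\<lambda>(x,b). vsum (\<delta> b) (\<lambda>(t,z2). K x t z2))"
  using arg_cong[OF HG3a, of "\<lambda>f. vsum (f z) (\<lambda>(x,(t,z2)). K x t z2)"]
  by (simp add: vsimps split_def)

lemma R_3b: "vsum (\<Delta>A a) (\<lambda>(a1,a2). vsum (\<gamma> a2) (\<lambda>(z,t). H a1 z t)) =
   vsum (\<gamma> a) (\<lambda>(z,t). vsum (\<alpha> z) (\<lambda>(a1,z1). H a1 z1 t))"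
  using arg_cong[OF HG3b, of "\<lambda>f. vsum (f a) (\<lambda>(a1,(z,t)). H a1 z t)"]
  by (simp add: vsimps split_def)

lemma R_4a: "vsum (\<gamma> a) (\<lambda>(z,t). vsum (S t) (\<lambda>z'. vsum (mZ (z,z')) G)) = \<epsilon>A a () * vsum (uZ ()) G"
  using arg_cong[OF HG4a, of "\<lambda>f. vsum (f a) G"]
  by (simp add: vsimps split_def)

lemma R_4b: "vsum (\<delta> b) (\<lambda>(t,z). vsum (S t) (\<lambda>z'. vsum (mZ (z',z)) G)) = \<epsilon>B b () * vsum (uZ ()) G"
  using arg_cong[OF HG4b, of "\<lambda>f. vsum (f b) G"]
  by (simp add: vsimps split_def)

definition \<phi> :: "'z \<Rightarrow> unit \<Rightarrow> 'k" where
  "\<phi> = (\<lambda>z _. if z = z0 then inverse (uZ () z0) else 0)"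

lemma lmap_\<phi>[simp]: "lmap \<phi>"
proof -
  have "{j. \<phi> z j \<noteq> 0} \<subseteq> UNIV" for z by simp
  then show ?thesis unfolding lmap_def by simp
qed

lemma R_\<phi>: "vsum (uZ ()) (\<lambda>w. \<phi> w () * c) = c"
proof -
  have "vsum (uZ ()) (\<lambda>w. \<phi> w () * c) = vsum (uZ ()) (\<lambda>w. (if w = z0 then 1 else 0) * (inverse (uZ () z0) * c))"
    unfolding \<phi>_def by (rule vsum_cong) auto
  also have "\<dots> = vsum (uZ ()) (\<lambda>w. if w = z0 then 1 else 0) * (inverse (uZ () z0) * c)"
    by (rule vsum_multc)
  also have "\<dots> = c" using lm(7) nz unfolding lmap_def by (simp add: vsum_delta)
  finally show ?thesis .
qed

definition Pm :: "'z \<times> ('a \<times> 'z) \<Rightarrow> 'a \<times> ('z \<times> 'z) \<Rightarrow> 'k" where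
  "Pm = lbasis (\<lambda>(z,(a,w)). (a,(z,w)))"

definition SA where
  "SA = runitor \<circ>\<^sub>L (lid \<otimes>\<^sub>L \<phi>) \<circ>\<^sub>L (lid \<otimes>\<^sub>L mZ) \<circ>\<^sub>L Pm \<circ>\<^sub>L (lid \<otimes>\<^sub>L \<alpha>) \<circ>\<^sub>L (lid \<otimes>\<^sub>L S) \<circ>\<^sub>L \<gamma>"

lemma lmap_SA[simp]: "lmap SA"
  unfolding SA_def Pm_def by simp

lemma R_SA: "vsum (SA a) F = vsum (\<gamma> a) (\<lambda>(z,t). vsum (S t) (\<lambda>z'. vsum (\<alpha> z') (\<lambda>(a',w'). vsum (mZ (z,w')) (\<lambda>w. \<phi> w () * F a'))))"
  unfolding SA_def Pm_def by (simp add: vsimps split_def mult.commute)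

lemma SA_right: "mA \<circ>\<^sub>L (lid \<otimes>\<^sub>L SA) \<circ>\<^sub>L \<Delta>A = uA \<circ>\<^sub>L \<epsilon>A"
proof (rule lmap_ext)
  fix a F
  have "vsum ((mA \<circ>\<^sub>L (lid \<otimes>\<^sub>L SA) \<circ>\<^sub>L \<Delta>A) a) F
     = vsum (\<Delta>A a) (\<lambda>(a1,a2). vsum (SA a2) (\<lambda>b. vsum (mA (a1,b)) F))"
    by (simp add: vsimps split_def)
  also have "\<dots> = vsum (\<Delta>A a) (\<lambda>(a1,a2). vsum (\<gamma> a2) (\<lambda>(z,t). vsum (S t) (\<lambda>z'. vsum (\<alpha> z') (\<lambda>(a',w'). vsum (mZ (z,w')) (\<lambda>w. \<phi> w () * vsum (mA (a1,a')) F)))))"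
    by (simp add: R_SA)
  also have "\<dots> = vsum (\<gamma> a) (\<lambda>(z,t). vsum (\<alpha> z) (\<lambda>(a1,z1). vsum (S t) (\<lambda>z'. vsum (\<alpha> z') (\<lambda>(a',w'). vsum (mZ (z1,w')) (\<lambda>w. \<phi> w () * vsum (mA (a1,a')) F)))))"
    by (rule R_3b)
  also have "\<dots> = vsum (\<gamma> a) (\<lambda>(z,t). vsum (S t) (\<lambda>z'. vsum (\<alpha> z) (\<lambda>(a1,z1). vsum (\<alpha> z') (\<lambda>(a',w'). vsum (mA (a1,a')) (\<lambda>c. vsum (mZ (z1,w')) (\<lambda>w. \<phi> w () * F c))))))"
    by (simp add: split_def swap_heads[of \<alpha> _ S] swap_heads[of mZ _ mA] vsum_cmult[symmetric])
  also have "\<dots> = vsum (\<gamma> a) (\<lambda>(z,t). vsum (S t) (\<lambda>z'. vsum (mZ (z,z')) (\<lambda>p. vsum (\<alpha> p) (\<lambda>(c,w). \<phi> w () * F c))))"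
    by (simp add: R_\<alpha>mult)
  also have "\<dots> = \<epsilon>A a () * vsum (uZ ()) (\<lambda>p. vsum (\<alpha> p) (\<lambda>(c,w). \<phi> w () * F c))"
    by (rule R_4a)
  also have "\<dots> = \<epsilon>A a () * vsum (uA ()) F"
    by (simp add: R_\<alpha>unit R_\<phi>)
  also have "\<dots> = vsum ((uA \<circ>\<^sub>L \<epsilon>A) a) F"
    by (simp add: vsimps)
  finally show "vsum ((mA \<circ>\<^sub>L (lid \<otimes>\<^sub>L SA) \<circ>\<^sub>L \<Delta>A) a) F = vsum ((uA \<circ>\<^sub>L \<epsilon>A) a) F" .
qed simp_all

lemma R_CAN: "vsum (\<gamma> a) (\<lambda>(z,t). vsum (\<alpha> z) (\<lambda>(a1,z1). vsum (S t) (\<lambda>s. vsum (mZ (z1,s)) (\<lambda>y. H a1 y))))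
   = vsum (uZ ()) (\<lambda>y. H a y)"
proof -
  have "vsum (\<gamma> a) (\<lambda>(z,t). vsum (\<alpha> z) (\<lambda>(a1,z1). vsum (S t) (\<lambda>s. vsum (mZ (z1,s)) (\<lambda>y. H a1 y))))
     = vsum (\<Delta>A a) (\<lambda>(a1,a2). vsum (\<gamma> a2) (\<lambda>(z,t). vsum (S t) (\<lambda>s. vsum (mZ (z,s)) (\<lambda>y. H a1 y))))"
    by (rule R_3b[symmetric])
  also have "\<dots> = vsum (\<Delta>A a) (\<lambda>(a1,a2). \<epsilon>A a2 () * vsum (uZ ()) (\<lambda>y. H a1 y))"
    by (simp add: R_4a)
  also have "\<dots> = vsum (uZ ()) (\<lambda>y. H a y)" by (rule R_cA)
  finally show ?thesis .
qed

lemma R_P2: "vsum (\<alpha> z) (\<lambda>(b1,z2). vsum (\<gamma> b1) (\<lambda>(x,t). vsum (S t) (\<lambda>z'. vsum (mZ (z',z2)) (\<lambda>p. H x p))))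
   = vsum (uZ ()) (\<lambda>p. H z p)"
proof -
  have "vsum (\<alpha> z) (\<lambda>(b1,z2). vsum (\<gamma> b1) (\<lambda>(x,t). vsum (S t) (\<lambda>z'. vsum (mZ (z',z2)) (\<lambda>p. H x p))))
    = vsum (\<beta> z) (\<lambda>(x,b). vsum (\<delta> b) (\<lambda>(t,z2). vsum (S t) (\<lambda>z'. vsum (mZ (z',z2)) (\<lambda>p. H x p))))"
    by (rule R_3a)
  also have "\<dots> = vsum (\<beta> z) (\<lambda>(x,b). \<epsilon>B b () * vsum (uZ ()) (\<lambda>p. H x p))"
    by (simp add: R_4b)
  also have "\<dots> = vsum (uZ ()) (\<lambda>p. H z p)" by (rule R_\<beta>counit)
  finally show ?thesis .
qed

definition Gk where
  "Gk K a = vsum (\<Delta>A a) (\<lambda>(a1,a2). vsum (\<gamma> a1) (\<lambda>(x,t). vsum (S t) (\<lambda>z'. vsum (\<alpha> z') (\<lambda>(a',w'). vsum (mZ (x,w')) (\<lambda>x'. vsum (mA (a',a2)) (\<lambda>c. K x' c))))))"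

lemma Gk_lin: "vsum v (\<lambda>y. Gk (K y) a) = Gk (\<lambda>x' c. vsum v (\<lambda>y. K y x' c)) a"
  unfolding Gk_def by (simp add: split_def vsum_swap[of v])

lemma key_swap: "vsum (\<alpha> z2) (\<lambda>(b2,z1). vsum (\<alpha> z') (\<lambda>(a',w'). vsum (mZ (x,w')) (\<lambda>x'. vsum (mA (a',b2)) (\<lambda>c. vsum (mZ (x',z1)) (\<lambda>y. F c y)))))
  = vsum (\<alpha> z') (\<lambda>(a',w'). vsum (\<alpha> z2) (\<lambda>(b2,z1). vsum (mA (a',b2)) (\<lambda>c. vsum (mZ (w',z1)) (\<lambda>y'. vsum (mZ (x,y')) (\<lambda>y. F c y)))))"
  apply (simp add: split_def)
  apply (subst vsum_swap)
  apply (simp add: swap_heads[of mZ _ mA] R_Zassoc)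
  done

lemma R_R: "vsum (\<alpha> z) (\<lambda>(a1,z1). Gk (\<lambda>x' c. vsum (mZ (x',z1)) (\<lambda>y. F c y)) a1) = vsum (uA ()) (\<lambda>c. F c z)"
proof -
  have "vsum (\<alpha> z) (\<lambda>(a1,z1). Gk (\<lambda>x' c. vsum (mZ (x',z1)) (\<lambda>y. F c y)) a1)
    = vsum (\<alpha> z) (\<lambda>(a1,z1). vsum (\<Delta>A a1) (\<lambda>(b1,b2). vsum (\<gamma> b1) (\<lambda>(x,t). vsum (S t) (\<lambda>z'. vsum (\<alpha> z') (\<lambda>(a',w'). vsum (mZ (x,w')) (\<lambda>x'. vsum (mA (a',b2)) (\<lambda>c. vsum (mZ (x',z1)) (\<lambda>y. F c y))))))))"
    unfolding Gk_def ..
  also have "\<dots> = vsum (\<alpha> z) (\<lambda>(b1,z2). vsum (\<alpha> z2) (\<lambda>(b2,z1). vsum (\<gamma> b1) (\<lambda>(x,t). vsum (S t) (\<lambda>z'. vsum (\<alpha> z') (\<lambda>(a',w'). vsum (mZ (x,w')) (\<lambda>x'. vsum (mA (a',b2)) (\<lambda>c. vsum (mZ (x',z1)) (\<lambda>y. F c y))))))))"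
    by (rule R_\<alpha>co)
  also have "\<dots> = vsum (\<alpha> z) (\<lambda>(b1,z2). vsum (\<gamma> b1) (\<lambda>(x,t). vsum (S t) (\<lambda>z'. vsum (\<alpha> z') (\<lambda>(a',w'). vsum (\<alpha> z2) (\<lambda>(b2,z1). vsum (mA (a',b2)) (\<lambda>c. vsum (mZ (w',z1)) (\<lambda>y'. vsum (mZ (x,y')) (\<lambda>y. F c y))))))))"
    by (simp add: split_def swap_heads[of \<alpha> _ \<gamma>] swap_heads[of \<alpha> _ S] key_swap[simplified split_def])
  also have "\<dots> = vsum (\<alpha> z) (\<lambda>(b1,z2). vsum (\<gamma> b1) (\<lambda>(x,t). vsum (S t) (\<lambda>z'. vsum (mZ (z',z2)) (\<lambda>p. vsum (\<alpha> p) (\<lambda>(c,y'). vsum (mZ (x,y')) (\<lambda>y. F c y))))))"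
    by (simp add: R_\<alpha>mult)
  also have "\<dots> = vsum (uZ ()) (\<lambda>p. vsum (\<alpha> p) (\<lambda>(c,y'). vsum (mZ (z,y')) (\<lambda>y. F c y)))"
    by (rule R_P2)
  also have "\<dots> = vsum (uA ()) (\<lambda>c. F c z)"
    by (simp add: R_\<alpha>unit R_Zunit)
  finally show ?thesis .
qed

lemma R_Gmain: "vsum (uZ ()) (\<lambda>w. Gk (\<lambda>x' c. vsum (mZ (x',w)) (\<lambda>y. F c y)) a)
   = \<epsilon>A a () * vsum (uA ()) (\<lambda>c. vsum (uZ ()) (\<lambda>y. F c y))"
proof -
  have "vsum (uZ ()) (\<lambda>w. Gk (\<lambda>x' c. vsum (mZ (x',w)) (\<lambda>y. F c y)) a)
    = vsum (\<gamma> a) (\<lambda>(z,t). vsum (\<alpha> z) (\<lambda>(a1,z1). vsum (S t) (\<lambda>s. vsum (mZ (z1,s)) (\<lambda>y. Gk (\<lambda>x' c. vsum (mZ (x',y)) (\<lambda>r. F c r)) a1))))"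
    by (rule R_CAN[symmetric])
  also have "\<dots> = vsum (\<gamma> a) (\<lambda>(z,t). vsum (\<alpha> z) (\<lambda>(a1,z1). vsum (S t) (\<lambda>s. Gk (\<lambda>x' c. vsum (mZ (x',z1)) (\<lambda>p. vsum (mZ (p,s)) (\<lambda>r. F c r))) a1)))"
    by (simp add: Gk_lin R_Zassoc)
  also have "\<dots> = vsum (\<gamma> a) (\<lambda>(z,t). vsum (S t) (\<lambda>s. vsum (\<alpha> z) (\<lambda>(a1,z1). Gk (\<lambda>x' c. vsum (mZ (x',z1)) (\<lambda>p. vsum (mZ (p,s)) (\<lambda>r. F c r))) a1)))"
    by (simp add: split_def swap_heads[of \<alpha> _ S])
  also have "\<dots> = vsum (\<gamma> a) (\<lambda>(z,t). vsum (S t) (\<lambda>s. vsum (uA ()) (\<lambda>c. vsum (mZ (z,s)) (\<lambda>r. F c r))))"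
    by (simp add: R_R)
  also have "\<dots> = vsum (uA ()) (\<lambda>c. vsum (\<gamma> a) (\<lambda>(z,t). vsum (S t) (\<lambda>s. vsum (mZ (z,s)) (\<lambda>r. F c r))))"
    by (simp add: split_def swap_heads[of \<gamma> _ uA] swap_heads[of S _ uA])
  also have "\<dots> = \<epsilon>A a () * vsum (uA ()) (\<lambda>c. vsum (uZ ()) (\<lambda>y. F c y))"
    by (simp add: R_4a vsum_cmult)
  finally show ?thesis .
qed

lemma SA_left: "mA \<circ>\<^sub>L (SA \<otimes>\<^sub>L lid) \<circ>\<^sub>L \<Delta>A = uA \<circ>\<^sub>L \<epsilon>A"
proof (rule lmap_ext)
  fix a F
  have "vsum ((mA \<circ>\<^sub>L (SA \<otimes>\<^sub>L lid) \<circ>\<^sub>L \<Delta>A) a) F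
     = vsum (\<Delta>A a) (\<lambda>(a1,a2). vsum (SA a1) (\<lambda>b. vsum (mA (b,a2)) F))"
    by (simp add: vsimps split_def)
  also have "\<dots> = vsum (\<Delta>A a) (\<lambda>(a1,a2). vsum (\<gamma> a1) (\<lambda>(z,t). vsum (S t) (\<lambda>z'. vsum (\<alpha> z') (\<lambda>(a',w'). vsum (mZ (z,w')) (\<lambda>w. \<phi> w () * vsum (mA (a',a2)) F)))))"
    by (simp add: R_SA)
  also have "\<dots> = Gk (\<lambda>x' c. \<phi> x' () * F c) a"
    unfolding Gk_def by (simp add: split_def swap_heads[of mZ _ mA] vsum_cmult[symmetric])
  also have "\<dots> = Gk (\<lambda>x' c. vsum (uZ ()) (\<lambda>w. vsum (mZ (x',w)) (\<lambda>y. \<phi> y () * F c))) a"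
    by (simp add: R_Zunit)
  also have "\<dots> = vsum (uZ ()) (\<lambda>w. Gk (\<lambda>x' c. vsum (mZ (x',w)) (\<lambda>y. \<phi> y () * F c)) a)"
    by (rule Gk_lin[symmetric])
  also have "\<dots> = \<epsilon>A a () * vsum (uA ()) (\<lambda>c. vsum (uZ ()) (\<lambda>y. \<phi> y () * F c))"
    by (rule R_Gmain)
  also have "\<dots> = vsum ((uA \<circ>\<^sub>L \<epsilon>A) a) F"
    by (simp add: vsimps R_\<phi>)
  finally show "vsum ((mA \<circ>\<^sub>L (SA \<otimes>\<^sub>L lid) \<circ>\<^sub>L \<Delta>A) a) F = vsum ((uA \<circ>\<^sub>L \<epsilon>A) a) F" .
qed simp_all

lemma SA_antipode: "is_antipode mA uA \<Delta>A \<epsilon>A SA"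
  unfolding is_antipode_def using SA_left SA_right by simp

end

locale HGB =
  fixes mB :: "'b \<times> 'b \<Rightarrow> 'b \<Rightarrow> 'k::field" and uB :: "unit \<Rightarrow> 'b \<Rightarrow> 'k"
    and \<Delta>B :: "'b \<Rightarrow> 'b \<times> 'b \<Rightarrow> 'k" and \<epsilon>B :: "'b \<Rightarrow> unit \<Rightarrow> 'k"
    and \<epsilon>A :: "'a \<Rightarrow> unit \<Rightarrow> 'k"
    and mZ :: "'z \<times> 'z \<Rightarrow> 'z \<Rightarrow> 'k" and uZ :: "unit \<Rightarrow> 'z \<Rightarrow> 'k"
    and \<alpha> :: "'z \<Rightarrow> 'a \<times> 'z \<Rightarrow> 'k" and \<beta> :: "'z \<Rightarrow> 'z \<times> 'b \<Rightarrow> 'k"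
    and \<gamma> :: "'a \<Rightarrow> 'z \<times> 't \<Rightarrow> 'k" and \<delta> :: "'b \<Rightarrow> 't \<times> 'z \<Rightarrow> 'k"
    and S :: "'t \<Rightarrow> 'z \<Rightarrow> 'k" and z0 :: 'z
  assumes lm: "lmap mB" "lmap uB" "lmap \<Delta>B" "lmap \<epsilon>B" "lmap \<epsilon>A" "lmap mZ" "lmap uZ"
     "lmap \<alpha>" "lmap \<beta>" "lmap \<gamma>" "lmap \<delta>" "lmap S"
  and cB: "(\<epsilon>B \<otimes>\<^sub>L lid) \<circ>\<^sub>L \<Delta>B = lunitor_inv"
  and \<beta>_mult: "\<beta> \<circ>\<^sub>L mZ = tmult mZ mB \<circ>\<^sub>L (\<beta> \<otimes>\<^sub>L \<beta>)"
  and \<beta>_unit: "\<beta> \<circ>\<^sub>L uZ = tunit uZ uB"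
  and \<beta>_co: "lassoc \<circ>\<^sub>L (\<beta> \<otimes>\<^sub>L lid) \<circ>\<^sub>L \<beta> = (lid \<otimes>\<^sub>L \<Delta>B) \<circ>\<^sub>L \<beta>"
  and \<alpha>_counit: "(\<epsilon>A \<otimes>\<^sub>L lid) \<circ>\<^sub>L \<alpha> = lunitor_inv"
  and Z_assoc: "mZ \<circ>\<^sub>L (mZ \<otimes>\<^sub>L lid) = mZ \<circ>\<^sub>L (lid \<otimes>\<^sub>L mZ) \<circ>\<^sub>L lassoc"
  and Z_lunit: "mZ \<circ>\<^sub>L (uZ \<otimes>\<^sub>L lid) = lunitor"
  and HG3a: "lassoc \<circ>\<^sub>L (\<gamma> \<otimes>\<^sub>L lid) \<circ>\<^sub>L \<alpha> = (lid \<otimes>\<^sub>L \<delta>) \<circ>\<^sub>L \<beta>"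
  and HG3c: "(lid \<otimes>\<^sub>L \<beta>) \<circ>\<^sub>L \<delta> = lassoc \<circ>\<^sub>L (\<delta> \<otimes>\<^sub>L lid) \<circ>\<^sub>L \<Delta>B"
  and HG4a: "mZ \<circ>\<^sub>L (lid \<otimes>\<^sub>L S) \<circ>\<^sub>L \<gamma> = uZ \<circ>\<^sub>L \<epsilon>A"
  and HG4b: "mZ \<circ>\<^sub>L (S \<otimes>\<^sub>L lid) \<circ>\<^sub>L \<delta> = uZ \<circ>\<^sub>L \<epsilon>B"
  and nz: "uZ () z0 \<noteq> 0"
begin

lemmas lms[simp] = lm

lemma R_cB: "vsum (\<Delta>B b) (\<lambda>(b1,b2). \<epsilon>B b1 () * H b2) = H b"
  using arg_cong[OF cB, of "\<lambda>f. vsum (f b) (\<lambda>(_,b2). H b2)"]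
  by (simp add: vsimps split_def)

lemma R_\<beta>mult: "vsum (mZ (x,y)) (\<lambda>p. vsum (\<beta> p) (\<lambda>(w,c). G w c)) =
   vsum (\<beta> x) (\<lambda>(x1,b1). vsum (\<beta> y) (\<lambda>(y1,b2). vsum (mB (b1,b2)) (\<lambda>c. vsum (mZ (x1,y1)) (\<lambda>w. G w c))))"
  using arg_cong[OF \<beta>_mult, of "\<lambda>f. vsum (f (x,y)) (\<lambda>(w,c). G w c)"]
  by (simp add: vsimps split_def swap_heads[of mZ _ mB])

lemma R_\<beta>mult': "vsum (mZ (x,y)) (\<lambda>p. vsum (\<beta> p) (\<lambda>(w,c). G w c)) =
   vsum (\<beta> y) (\<lambda>(y1,b2). vsum (\<beta> x) (\<lambda>(x1,b1). vsum (mB (b1,b2)) (\<lambda>c. vsum (mZ (x1,y1)) (\<lambda>w. G w c))))"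
  unfolding R_\<beta>mult by (simp add: split_def) (rule vsum_swap)

lemma R_\<beta>unit: "vsum (uZ ()) (\<lambda>p. vsum (\<beta> p) (\<lambda>(w,c). G w c)) = vsum (uZ ()) (\<lambda>w. vsum (uB ()) (\<lambda>c. G w c))"
  using arg_cong[OF \<beta>_unit, of "\<lambda>f. vsum (f ()) (\<lambda>(w,c). G w c)"]
  by (simp add: vsimps split_def)

lemma R_\<beta>co: "vsum (\<beta> z) (\<lambda>(x,b). vsum (\<beta> x) (\<lambda>(z1,b1). K z1 b1 b)) =
   vsum (\<beta> z) (\<lambda>(z1,b). vsum (\<Delta>B b) (\<lambda>(b1,b2). K z1 b1 b2))"
  using arg_cong[OF \<beta>_co, of "\<lambda>f. vsum (f z) (\<lambda>(z1,(b1,b2)). K z1 b1 b2)"]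
  by (simp add: vsimps split_def)

lemma R_\<alpha>counit: "vsum (\<alpha> z) (\<lambda>(a,x). \<epsilon>A a () * L x) = L z"
  using arg_cong[OF \<alpha>_counit, of "\<lambda>f. vsum (f z) (\<lambda>(_,x). L x)"]
  by (simp add: vsimps split_def)

lemma R_Zassoc: "vsum (mZ (x,y)) (\<lambda>p. vsum (mZ (p,w)) H) = vsum (mZ (y,w)) (\<lambda>q. vsum (mZ (x,q)) H)"
  using arg_cong[OF Z_assoc, of "\<lambda>f. vsum (f ((x,y),w)) H"]
  by (simp add: vsimps split_def)

lemma R_Zlunit: "vsum (uZ ()) (\<lambda>w. vsum (mZ (w,x)) H) = H x"
  using arg_cong[OF Z_lunit, of "\<lambda>f. vsum (f ((),x)) H"]
  by (simp add: vsimps split_def)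

lemma R_3a: "vsum (\<alpha> z) (\<lambda>(b1,z2). vsum (\<gamma> b1) (\<lambda>(x,t). K x t z2)) =
   vsum (\<beta> z) (\<lambda>(x,b). vsum (\<delta> b) (\<lambda>(t,z2). K x t z2))"
  using arg_cong[OF HG3a, of "\<lambda>f. vsum (f z) (\<lambda>(x,(t,z2)). K x t z2)"]
  by (simp add: vsimps split_def)

lemma R_3c: "vsum (\<delta> b) (\<lambda>(t,z). vsum (\<beta> z) (\<lambda>(z1,b2). K t z1 b2)) =
   vsum (\<Delta>B b) (\<lambda>(b1,b2). vsum (\<delta> b1) (\<lambda>(t,z). K t z b2))"
  using arg_cong[OF HG3c, of "\<lambda>f. vsum (f b) (\<lambda>(t,(z,b2)). K t z b2)"]
  by (simp add: vsimps split_def)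

lemma R_4a: "vsum (\<gamma> a) (\<lambda>(z,t). vsum (S t) (\<lambda>z'. vsum (mZ (z,z')) G)) = \<epsilon>A a () * vsum (uZ ()) G"
  using arg_cong[OF HG4a, of "\<lambda>f. vsum (f a) G"]
  by (simp add: vsimps split_def)

lemma R_4b: "vsum (\<delta> b) (\<lambda>(t,z). vsum (S t) (\<lambda>z'. vsum (mZ (z',z)) G)) = \<epsilon>B b () * vsum (uZ ()) G"
  using arg_cong[OF HG4b, of "\<lambda>f. vsum (f b) G"]
  by (simp add: vsimps split_def)

definition \<phi> :: "'z \<Rightarrow> unit \<Rightarrow> 'k" where
  "\<phi> = (\<lambda>z _. if z = z0 then inverse (uZ () z0) else 0)"

lemma lmap_\<phi>[simp]: "lmap \<phi>"
proof -
  have "{j. \<phi> z j \<noteq> 0} \<subseteq> UNIV" for z by simp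
  then show ?thesis unfolding lmap_def by simp
qed

lemma R_\<phi>: "vsum (uZ ()) (\<lambda>w. \<phi> w () * c) = c"
proof -
  have "vsum (uZ ()) (\<lambda>w. \<phi> w () * c) = vsum (uZ ()) (\<lambda>w. (if w = z0 then 1 else 0) * (inverse (uZ () z0) * c))"
    unfolding \<phi>_def by (rule vsum_cong) auto
  also have "\<dots> = vsum (uZ ()) (\<lambda>w. if w = z0 then 1 else 0) * (inverse (uZ () z0) * c)"
    by (rule vsum_multc)
  also have "\<dots> = c" using lm(7) nz unfolding lmap_def by (simp add: vsum_delta)
  finally show ?thesis .
qed

definition Pm :: "('z \<times> 'b) \<times> 'z \<Rightarrow> ('z \<times> 'z) \<times> 'b \<Rightarrow> 'k" where
  "Pm = lbasis (\<lambda>((w,b),z). ((w,z),b))"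

definition SB where
  "SB = lunitor \<circ>\<^sub>L (\<phi> \<otimes>\<^sub>L lid) \<circ>\<^sub>L (mZ \<otimes>\<^sub>L lid) \<circ>\<^sub>L Pm \<circ>\<^sub>L (\<beta> \<otimes>\<^sub>L lid) \<circ>\<^sub>L (S \<otimes>\<^sub>L lid) \<circ>\<^sub>L \<delta>"

lemma lmap_SB[simp]: "lmap SB"
  unfolding SB_def Pm_def by simp

lemma R_SB: "vsum (SB b) F = vsum (\<delta> b) (\<lambda>(t,z). vsum (S t) (\<lambda>z'. vsum (\<beta> z') (\<lambda>(w',b'). vsum (mZ (w',z)) (\<lambda>w. \<phi> w () * F b'))))"
  unfolding SB_def Pm_def by (simp add: vsimps split_def)

lemma SB_left: "mB \<circ>\<^sub>L (SB \<otimes>\<^sub>L lid) \<circ>\<^sub>L \<Delta>B = uB \<circ>\<^sub>L \<epsilon>B"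
proof (rule lmap_ext)
  fix b F
  have "vsum ((mB \<circ>\<^sub>L (SB \<otimes>\<^sub>L lid) \<circ>\<^sub>L \<Delta>B) b) F
     = vsum (\<Delta>B b) (\<lambda>(b1,b2). vsum (SB b1) (\<lambda>c. vsum (mB (c,b2)) F))"
    by (simp add: vsimps split_def)
  also have "\<dots> = vsum (\<Delta>B b) (\<lambda>(b1,b2). vsum (\<delta> b1) (\<lambda>(t,z). vsum (S t) (\<lambda>z'. vsum (\<beta> z') (\<lambda>(w',b'). vsum (mZ (w',z)) (\<lambda>w. \<phi> w () * vsum (mB (b',b2)) F)))))"
    by (simp add: R_SB)
  also have "\<dots> = vsum (\<delta> b) (\<lambda>(t,z). vsum (\<beta> z) (\<lambda>(z1,b2). vsum (S t) (\<lambda>z'. vsum (\<beta> z') (\<lambda>(w',b'). vsum (mZ (w',z1)) (\<lambda>w. \<phi> w () * vsum (mB (b',b2)) F)))))"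
    by (rule R_3c[symmetric])
  also have "\<dots> = vsum (\<delta> b) (\<lambda>(t,z). vsum (S t) (\<lambda>z'. vsum (\<beta> z) (\<lambda>(z1,b2). vsum (\<beta> z') (\<lambda>(w',b'). vsum (mB (b',b2)) (\<lambda>c. vsum (mZ (w',z1)) (\<lambda>w. \<phi> w () * F c))))))"
    by (simp add: split_def swap_heads[of \<beta> _ S] swap_heads[of mZ _ mB] vsum_cmult[symmetric])
  also have "\<dots> = vsum (\<delta> b) (\<lambda>(t,z). vsum (S t) (\<lambda>z'. vsum (mZ (z',z)) (\<lambda>p. vsum (\<beta> p) (\<lambda>(w,c). \<phi> w () * F c))))"
    by (simp add: R_\<beta>mult')
  also have "\<dots> = \<epsilon>B b () * vsum (uZ ()) (\<lambda>p. vsum (\<beta> p) (\<lambda>(w,c). \<phi> w () * F c))"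
    by (rule R_4b)
  also have "\<dots> = \<epsilon>B b () * vsum (uB ()) F"
    by (simp add: R_\<beta>unit vsum_cmult R_\<phi>)
  also have "\<dots> = vsum ((uB \<circ>\<^sub>L \<epsilon>B) b) F"
    by (simp add: vsimps)
  finally show "vsum ((mB \<circ>\<^sub>L (SB \<otimes>\<^sub>L lid) \<circ>\<^sub>L \<Delta>B) b) F = vsum ((uB \<circ>\<^sub>L \<epsilon>B) b) F" .
qed simp_all

lemma R_CAN: "vsum (\<delta> b) (\<lambda>(t,z). vsum (\<beta> z) (\<lambda>(z1,b1). vsum (S t) (\<lambda>s. vsum (mZ (s,z1)) (\<lambda>y. H y b1))))
   = vsum (uZ ()) (\<lambda>y. H y b)"
proof -
  have "vsum (\<delta> b) (\<lambda>(t,z). vsum (\<beta> z) (\<lambda>(z1,b1). vsum (S t) (\<lambda>s. vsum (mZ (s,z1)) (\<lambda>y. H y b1))))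
     = vsum (\<Delta>B b) (\<lambda>(b1,b2). vsum (\<delta> b1) (\<lambda>(t,z). vsum (S t) (\<lambda>s. vsum (mZ (s,z)) (\<lambda>y. H y b2))))"
    by (rule R_3c)
  also have "\<dots> = vsum (\<Delta>B b) (\<lambda>(b1,b2). \<epsilon>B b1 () * vsum (uZ ()) (\<lambda>y. H y b2))"
    by (simp add: R_4b)
  also have "\<dots> = vsum (uZ ()) (\<lambda>y. H y b)" by (rule R_cB)
  finally show ?thesis .
qed

lemma R_P2: "vsum (\<beta> z) (\<lambda>(z2,b1). vsum (\<delta> b1) (\<lambda>(t,x). vsum (S t) (\<lambda>z'. vsum (mZ (z2,z')) (\<lambda>p. H p x))))
   = vsum (uZ ()) (\<lambda>p. H p z)"
proof -
  have "vsum (\<beta> z) (\<lambda>(z2,b1). vsum (\<delta> b1) (\<lambda>(t,x). vsum (S t) (\<lambda>z'. vsum (mZ (z2,z')) (\<lambda>p. H p x))))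
    = vsum (\<alpha> z) (\<lambda>(b1,x). vsum (\<gamma> b1) (\<lambda>(z2,t). vsum (S t) (\<lambda>z'. vsum (mZ (z2,z')) (\<lambda>p. H p x))))"
    by (rule R_3a[symmetric])
  also have "\<dots> = vsum (\<alpha> z) (\<lambda>(b1,x). \<epsilon>A b1 () * vsum (uZ ()) (\<lambda>p. H p x))"
    by (simp add: R_4a)
  also have "\<dots> = vsum (uZ ()) (\<lambda>p. H p z)" by (rule R_\<alpha>counit)
  finally show ?thesis .
qed

definition Gk where
  "Gk K b = vsum (\<Delta>B b) (\<lambda>(b1,b2). vsum (\<delta> b2) (\<lambda>(t,x). vsum (S t) (\<lambda>z'. vsum (\<beta> z') (\<lambda>(w',b'). vsum (mZ (w',x)) (\<lambda>x'. vsum (mB (b1,b')) (\<lambda>c. K x' c))))))"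

lemma Gk_lin: "vsum v (\<lambda>y. Gk (K y) b) = Gk (\<lambda>x' c. vsum v (\<lambda>y. K y x' c)) b"
  unfolding Gk_def by (simp add: split_def vsum_swap[of v])

lemma R_R: "vsum (\<beta> z) (\<lambda>(z1,b1). Gk (\<lambda>x' c. vsum (mZ (z1,x')) (\<lambda>y. F y c)) b1) = vsum (uB ()) (\<lambda>c. F z c)"
proof -
  have "vsum (\<beta> z) (\<lambda>(z1,b1). Gk (\<lambda>x' c. vsum (mZ (z1,x')) (\<lambda>y. F y c)) b1)
    = vsum (\<beta> z) (\<lambda>(z1,b1). vsum (\<Delta>B b1) (\<lambda>(c1,c2). vsum (\<delta> c2) (\<lambda>(t,x). vsum (S t) (\<lambda>z'. vsum (\<beta> z') (\<lambda>(w',b'). vsum (mZ (w',x)) (\<lambda>x'. vsum (mB (c1,b')) (\<lambda>c. vsum (mZ (z1,x')) (\<lambda>y. F y c))))))))"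
    unfolding Gk_def ..
  also have "\<dots> = vsum (\<beta> z) (\<lambda>(z2,c2). vsum (\<beta> z2) (\<lambda>(z1,c1). vsum (\<delta> c2) (\<lambda>(t,x). vsum (S t) (\<lambda>z'. vsum (\<beta> z') (\<lambda>(w',b'). vsum (mZ (w',x)) (\<lambda>x'. vsum (mB (c1,b')) (\<lambda>c. vsum (mZ (z1,x')) (\<lambda>y. F y c))))))))"
    by (rule R_\<beta>co[symmetric])
  also have "\<dots> = vsum (\<beta> z) (\<lambda>(z2,c2). vsum (\<delta> c2) (\<lambda>(t,x). vsum (S t) (\<lambda>z'. vsum (\<beta> z2) (\<lambda>(z1,c1). vsum (\<beta> z') (\<lambda>(w',b'). vsum (mB (c1,b')) (\<lambda>c. vsum (mZ (z1,w')) (\<lambda>y'. vsum (mZ (y',x)) (\<lambda>y. F y c))))))))"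
    by (simp add: split_def swap_heads[of \<beta> _ \<delta>] swap_heads[of \<beta> _ S] swap_heads[of mZ _ mB] R_Zassoc[symmetric])
  also have "\<dots> = vsum (\<beta> z) (\<lambda>(z2,c2). vsum (\<delta> c2) (\<lambda>(t,x). vsum (S t) (\<lambda>z'. vsum (mZ (z2,z')) (\<lambda>p. vsum (\<beta> p) (\<lambda>(y',c). vsum (mZ (y',x)) (\<lambda>y. F y c))))))"
    by (simp add: R_\<beta>mult)
  also have "\<dots> = vsum (uZ ()) (\<lambda>p. vsum (\<beta> p) (\<lambda>(y',c). vsum (mZ (y',z)) (\<lambda>y. F y c)))"
    by (rule R_P2)
  also have "\<dots> = vsum (uB ()) (\<lambda>c. F z c)"
    by (simp add: R_\<beta>unit, simp add: swap_heads[of uZ _ uB] R_Zlunit)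
  finally show ?thesis .
qed

lemma R_Gmain: "vsum (uZ ()) (\<lambda>w. Gk (\<lambda>x' c. vsum (mZ (w,x')) (\<lambda>y. F y c)) b)
   = \<epsilon>B b () * vsum (uB ()) (\<lambda>c. vsum (uZ ()) (\<lambda>y. F y c))"
proof -
  have "vsum (uZ ()) (\<lambda>w. Gk (\<lambda>x' c. vsum (mZ (w,x')) (\<lambda>y. F y c)) b)
    = vsum (\<delta> b) (\<lambda>(t,z). vsum (\<beta> z) (\<lambda>(z1,b1). vsum (S t) (\<lambda>s. vsum (mZ (s,z1)) (\<lambda>y. Gk (\<lambda>x' c. vsum (mZ (y,x')) (\<lambda>r. F r c)) b1))))"
    by (rule R_CAN[symmetric])
  also have "\<dots> = vsum (\<delta> b) (\<lambda>(t,z). vsum (\<beta> z) (\<lambda>(z1,b1). vsum (S t) (\<lambda>s. Gk (\<lambda>x' c. vsum (mZ (z1,x')) (\<lambda>q. vsum (mZ (s,q)) (\<lambda>r. F r c))) b1)))"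
    by (simp add: Gk_lin R_Zassoc)
  also have "\<dots> = vsum (\<delta> b) (\<lambda>(t,z). vsum (S t) (\<lambda>s. vsum (\<beta> z) (\<lambda>(z1,b1). Gk (\<lambda>x' c. vsum (mZ (z1,x')) (\<lambda>q. vsum (mZ (s,q)) (\<lambda>r. F r c))) b1)))"
    by (simp add: split_def swap_heads[of \<beta> _ S])
  also have "\<dots> = vsum (\<delta> b) (\<lambda>(t,z). vsum (S t) (\<lambda>s. vsum (uB ()) (\<lambda>c. vsum (mZ (s,z)) (\<lambda>r. F r c))))"
    by (simp add: R_R)
  also have "\<dots> = vsum (uB ()) (\<lambda>c. vsum (\<delta> b) (\<lambda>(t,z). vsum (S t) (\<lambda>s. vsum (mZ (s,z)) (\<lambda>r. F r c))))"
    by (simp add: split_def swap_heads[of \<delta> _ uB] swap_heads[of S _ uB])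
  also have "\<dots> = \<epsilon>B b () * vsum (uB ()) (\<lambda>c. vsum (uZ ()) (\<lambda>y. F y c))"
    by (simp add: R_4b vsum_cmult)
  finally show ?thesis .
qed

lemma SB_right: "mB \<circ>\<^sub>L (lid \<otimes>\<^sub>L SB) \<circ>\<^sub>L \<Delta>B = uB \<circ>\<^sub>L \<epsilon>B"
proof (rule lmap_ext)
  fix b F
  have "vsum ((mB \<circ>\<^sub>L (lid \<otimes>\<^sub>L SB) \<circ>\<^sub>L \<Delta>B) b) F
     = vsum (\<Delta>B b) (\<lambda>(b1,b2). vsum (SB b2) (\<lambda>c. vsum (mB (b1,c)) F))"
    by (simp add: vsimps split_def)
  also have "\<dots> = vsum (\<Delta>B b) (\<lambda>(b1,b2). vsum (\<delta> b2) (\<lambda>(t,z). vsum (S t) (\<lambda>z'. vsum (\<beta> z') (\<lambda>(w',b'). vsum (mZ (w',z)) (\<lambda>w. \<phi> w () * vsum (mB (b1,b')) F)))))"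
    by (simp add: R_SB)
  also have "\<dots> = Gk (\<lambda>x' c. \<phi> x' () * F c) b"
    unfolding Gk_def by (simp add: split_def swap_heads[of mZ _ mB] vsum_cmult[symmetric])
  also have "\<dots> = Gk (\<lambda>x' c. vsum (uZ ()) (\<lambda>w. vsum (mZ (w,x')) (\<lambda>y. \<phi> y () * F c))) b"
    by (simp add: R_Zlunit)
  also have "\<dots> = vsum (uZ ()) (\<lambda>w. Gk (\<lambda>x' c. vsum (mZ (w,x')) (\<lambda>y. \<phi> y () * F c)) b)"
    by (rule Gk_lin[symmetric])
  also have "\<dots> = \<epsilon>B b () * vsum (uB ()) (\<lambda>c. vsum (uZ ()) (\<lambda>y. \<phi> y () * F c))"
    by (rule R_Gmain)
  also have "\<dots> = vsum ((uB \<circ>\<^sub>L \<epsilon>B) b) F"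
    by (simp add: vsimps R_\<phi>)
  finally show "vsum ((mB \<circ>\<^sub>L (lid \<otimes>\<^sub>L SB) \<circ>\<^sub>L \<Delta>B) b) F = vsum ((uB \<circ>\<^sub>L \<epsilon>B) b) F" .
qed simp_all

lemma SB_antipode: "is_antipode mB uB \<Delta>B \<epsilon>B SB"
  unfolding is_antipode_def using SB_left SB_right by simp

end

theorem corollary1p3:
  fixes mA :: "'a \<times> 'a \<Rightarrow> 'a \<Rightarrow> 'k::field" and uA :: "unit \<Rightarrow> 'a \<Rightarrow> 'k"
    and \<Delta>A :: "'a \<Rightarrow> 'a \<times> 'a \<Rightarrow> 'k" and \<epsilon>A :: "'a \<Rightarrow> unit \<Rightarrow> 'k"
    and mB :: "'b \<times> 'b \<Rightarrow> 'b \<Rightarrow> 'k" and uB :: "unit \<Rightarrow> 'b \<Rightarrow> 'k"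
    and \<Delta>B :: "'b \<Rightarrow> 'b \<times> 'b \<Rightarrow> 'k" and \<epsilon>B :: "'b \<Rightarrow> unit \<Rightarrow> 'k"
    and mZ :: "'z \<times> 'z \<Rightarrow> 'z \<Rightarrow> 'k" and uZ :: "unit \<Rightarrow> 'z \<Rightarrow> 'k"
    and mT :: "'t \<times> 't \<Rightarrow> 't \<Rightarrow> 'k" and uT :: "unit \<Rightarrow> 't \<Rightarrow> 'k"
    and \<alpha> :: "'z \<Rightarrow> 'a \<times> 'z \<Rightarrow> 'k" and \<beta> :: "'z \<Rightarrow> 'z \<times> 'b \<Rightarrow> 'k"
    and \<gamma> :: "'a \<Rightarrow> 'z \<times> 't \<Rightarrow> 'k" and \<delta> :: "'b \<Rightarrow> 't \<times> 'z \<Rightarrow> 'k"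
    and S :: "'t \<Rightarrow> 'z \<Rightarrow> 'k"
  assumes "hopf_galois_system mA uA \<Delta>A \<epsilon>A mB uB \<Delta>B \<epsilon>B mZ uZ mT uT \<alpha> \<beta> \<gamma> \<delta> S"
  shows "is_hopf_algebra mA uA \<Delta>A \<epsilon>A \<and> is_hopf_algebra mB uB \<Delta>B \<epsilon>B"
proof -
  from assms have H: "is_algebra mT uT"
     "nonzero_algebra uZ"
     "is_bialgebra mA uA \<Delta>A \<epsilon>A" "is_bialgebra mB uB \<Delta>B \<epsilon>B"
     "bicomodule_algebra mA uA \<Delta>A \<epsilon>A mB uB \<Delta>B \<epsilon>B mZ uZ \<alpha> \<beta>"
     "alg_hom mA uA (tmult mZ mT) (tunit uZ uT) \<gamma>"
     "alg_hom mB uB (tmult mT mZ) (tunit uT uZ) \<delta>"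
     "lassoc \<circ>\<^sub>L (\<gamma> \<otimes>\<^sub>L lid) \<circ>\<^sub>L \<alpha> = (lid \<otimes>\<^sub>L \<delta>) \<circ>\<^sub>L \<beta>"
     "lassoc \<circ>\<^sub>L (\<alpha> \<otimes>\<^sub>L lid) \<circ>\<^sub>L \<gamma> = (lid \<otimes>\<^sub>L \<gamma>) \<circ>\<^sub>L \<Delta>A"
     "(lid \<otimes>\<^sub>L \<beta>) \<circ>\<^sub>L \<delta> = lassoc \<circ>\<^sub>L (\<delta> \<otimes>\<^sub>L lid) \<circ>\<^sub>L \<Delta>B"
     "lmap S"
     "mZ \<circ>\<^sub>L (lid \<otimes>\<^sub>L S) \<circ>\<^sub>L \<gamma> = uZ \<circ>\<^sub>L \<epsilon>A"
     "mZ \<circ>\<^sub>L (S \<otimes>\<^sub>L lid) \<circ>\<^sub>L \<delta> = uZ \<circ>\<^sub>L \<epsilon>B"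
    unfolding hopf_galois_system_def by auto
  obtain z0 where nz: "uZ () z0 \<noteq> 0"
    using H(2) unfolding nonzero_algebra_def by auto
  have bA: "is_algebra mA uA" "lmap \<Delta>A" "lmap \<epsilon>A"
     "(lid \<otimes>\<^sub>L \<epsilon>A) \<circ>\<^sub>L \<Delta>A = runitor_inv"
    using H(3) unfolding is_bialgebra_def by auto
  have bB: "is_algebra mB uB" "lmap \<Delta>B" "lmap \<epsilon>B"
     "(\<epsilon>B \<otimes>\<^sub>L lid) \<circ>\<^sub>L \<Delta>B = lunitor_inv"
    using H(4) unfolding is_bialgebra_def by auto
  have aA: "lmap mA" "lmap uA" using bA(1) unfolding is_algebra_def by auto
  have aB: "lmap mB" "lmap uB" using bB(1) unfolding is_algebra_def by auto
  have bc: "is_algebra mZ uZ" "left_comodule \<Delta>A \<epsilon>A \<alpha>" "right_comodule \<Delta>B \<epsilon>B \<beta>"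
     "alg_hom mZ uZ (tmult mA mZ) (tunit uA uZ) \<alpha>"
     "alg_hom mZ uZ (tmult mZ mB) (tunit uZ uB) \<beta>"
    using H(5) unfolding bicomodule_algebra_def by auto
  have aZ: "lmap mZ" "lmap uZ"
     "mZ \<circ>\<^sub>L (mZ \<otimes>\<^sub>L lid) = mZ \<circ>\<^sub>L (lid \<otimes>\<^sub>L mZ) \<circ>\<^sub>L lassoc"
     "mZ \<circ>\<^sub>L (uZ \<otimes>\<^sub>L lid) = lunitor" "mZ \<circ>\<^sub>L (lid \<otimes>\<^sub>L uZ) = runitor"
    using bc(1) unfolding is_algebra_def by auto
  have lc: "lmap \<alpha>" "lassoc \<circ>\<^sub>L (\<Delta>A \<otimes>\<^sub>L lid) \<circ>\<^sub>L \<alpha> = (lid \<otimes>\<^sub>L \<alpha>) \<circ>\<^sub>L \<alpha>"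
     "(\<epsilon>A \<otimes>\<^sub>L lid) \<circ>\<^sub>L \<alpha> = lunitor_inv"
    using bc(2) unfolding left_comodule_def by auto
  have rc: "lmap \<beta>" "lassoc \<circ>\<^sub>L (\<beta> \<otimes>\<^sub>L lid) \<circ>\<^sub>L \<beta> = (lid \<otimes>\<^sub>L \<Delta>B) \<circ>\<^sub>L \<beta>"
     "(lid \<otimes>\<^sub>L \<epsilon>B) \<circ>\<^sub>L \<beta> = runitor_inv"
    using bc(3) unfolding right_comodule_def by auto
  have ha: "\<alpha> \<circ>\<^sub>L mZ = tmult mA mZ \<circ>\<^sub>L (\<alpha> \<otimes>\<^sub>L \<alpha>)" "\<alpha> \<circ>\<^sub>L uZ = tunit uA uZ"
    using bc(4) unfolding alg_hom_def by auto
  have hb: "\<beta> \<circ>\<^sub>L mZ = tmult mZ mB \<circ>\<^sub>L (\<beta> \<otimes>\<^sub>L \<beta>)" "\<beta> \<circ>\<^sub>L uZ = tunit uZ uB"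
    using bc(5) unfolding alg_hom_def by auto
  have lg: "lmap \<gamma>" "lmap \<delta>" using H(6,7) unfolding alg_hom_def by auto
  interpret A: HGA mA uA \<Delta>A \<epsilon>A \<epsilon>B mZ uZ \<alpha> \<beta> \<gamma> \<delta> S z0
    by unfold_locales (use aA bA bB aZ lc rc ha lg H nz in auto)
  interpret B: HGB mB uB \<Delta>B \<epsilon>B \<epsilon>A mZ uZ \<alpha> \<beta> \<gamma> \<delta> S z0
    by unfold_locales (use aB bA bB aZ lc rc hb lg H nz in auto)
  show ?thesis
    unfolding is_hopf_algebra_def using H(3,4) A.SA_antipode B.SB_antipode by blast
qed

end
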